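(* Let $P_1,\dots,P_5$ be any five points in the plane, with indices taken mod $5$. Define the following oriented areas: - $t_i=(P_{i-1}P_iP_{i+1})$ for $i=1,\dots,5$; - $A$, the oriented area of the closed polygon $P_1P_2P_3P_4P_5$; - $A'$, the oriented area of the closed (star) polygon $P_1P_3P_5P_2P_4$; - $t'_1=(P_4P_1P_3)$, $t'_3=(P_1P_3P_5)$, $t'_5=(P_3P_5P_2)$, $t'_2=(P_5P_2P_4)$, $t'_4=(P_2P_4P_1)$. Set $$c_1=\sum_{i=1}^5 t_i,\qquad c_2=t_1t_2+t_2t_3+t_3t_4+t_4t_5+t_5t_1,$$ $$c_1'=\sum_{i=1}^5 t'_i,\qquad c_2'=t'_1t'_3+t'_3t'_5+t'_5t'_2+t'_2t'_4+t'_4t'_1.$$ Then $$c_1=2A-A',\quad c_2=A(A-A'),\quad c_1'=2A'+A,\quad c_2'=A'(A+A'),$$ and consequently $$A^2-c_1A+c_2=0,\qquad A'^2-c_1^2+4c_2=0,\qquad A^2-c_1'^2+4c_2'=0,\qquad A'^2-c_1'A'+c_2'=0.$$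
   Context: For points $X,Y,Z$ in the plane, the oriented area is $(XYZ)=\tfrac12\det(Y-X,\,Z-X)$. The oriented area of a closed polygon $Q_1Q_2\cdots Q_m$ with $Q_j=(x_j,y_j)$ is $\tfrac12\sum_{j=1}^m (x_jy_{j+1}-x_{j+1}y_j)$, with indices mod $m$. The $t'_i$ are the oriented areas of the vertex triangles of the star pentagon $P_1P_3P_5P_2P_4$. *)

theory Defs
  imports Complex_Main
begin

type_synonym point = "real \<times> real"

definition oarea :: "point \<Rightarrow> point \<Rightarrow> point \<Rightarrow> real" where
  "oarea X Y Z = ((fst Y - fst X) * (snd Z - snd X) - (snd Y - snd X) * (fst Z - fst X)) / 2"

definition poly_area :: "point list \<Rightarrow> real" where
  "poly_area Qs = (let m = length Qs in
     (\<Sum>j<m. fst (Qs ! j) * snd (Qs ! ((j + 1) mod m)) - fst (Qs ! ((j + 1) mod m)) * snd (Qs ! j)) / 2)"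

end

theory Submission
  imports Defs
begin

theorem theorem2:
  fixes P1 P2 P3 P4 P5 :: point
  defines "t1 \<equiv> oarea P5 P1 P2"
      and "t2 \<equiv> oarea P1 P2 P3"
      and "t3 \<equiv> oarea P2 P3 P4"
      and "t4 \<equiv> oarea P3 P4 P5"
      and "t5 \<equiv> oarea P4 P5 P1"
      and "A \<equiv> poly_area [P1, P2, P3, P4, P5]"
      and "A' \<equiv> poly_area [P1, P3, P5, P2, P4]"
      and "t1' \<equiv> oarea P4 P1 P3"
      and "t3' \<equiv> oarea P1 P3 P5"
      and "t5' \<equiv> oarea P3 P5 P2"
      and "t2' \<equiv> oarea P5 P2 P4"
      and "t4' \<equiv> oarea P2 P4 P1"
  shows "let c1 = t1 + t2 + t3 + t4 + t5;
             c2 = t1 * t2 + t2 * t3 + t3 * t4 + t4 * t5 + t5 * t1;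
             c1' = t1' + t2' + t3' + t4' + t5';
             c2' = t1' * t3' + t3' * t5' + t5' * t2' + t2' * t4' + t4' * t1'
         in c1 = 2 * A - A' \<and> c2 = A * (A - A') \<and> c1' = 2 * A' + A \<and> c2' = A' * (A + A') \<and>
         A\<^sup>2 - c1 * A + c2 = 0 \<and> A'\<^sup>2 - c1\<^sup>2 + 4 * c2 = 0 \<and>
         A\<^sup>2 - c1'\<^sup>2 + 4 * c2' = 0 \<and> A'\<^sup>2 - c1' * A' + c2' = 0"
proof -
  obtain x1 y1 where p1: "P1 = (x1,y1)" by fastforce
  obtain x2 y2 where p2: "P2 = (x2,y2)" by fastforce
  obtain x3 y3 where p3: "P3 = (x3,y3)" by fastforce
  obtain x4 y4 where p4: "P4 = (x4,y4)" by fastforce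
  obtain x5 y5 where p5: "P5 = (x5,y5)" by fastforce
  have s5: "\<And>f::nat\<Rightarrow>real. (\<Sum>j<5. f j) = f 0 + f 1 + f 2 + f 3 + f 4"
    by (simp add: numeral_eq_Suc)
  have eA: "A = (x1*y2 - x2*y1 + x2*y3 - x3*y2 + x3*y4 - x4*y3 + x4*y5 - x5*y4 + x5*y1 - x1*y5)/2"
    unfolding A_def poly_area_def Let_def s5 by (simp add: p1 p2 p3 p4 p5)
  have eA': "A' = (x1*y3 - x3*y1 + x3*y5 - x5*y3 + x5*y2 - x2*y5 + x2*y4 - x4*y2 + x4*y1 - x1*y4)/2"
    unfolding A'_def poly_area_def Let_def s5 by (simp add: p1 p2 p3 p4 p5)
  note defs = t1_def t2_def t3_def t4_def t5_def t1'_def t2'_def t3'_def t4'_def t5'_def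
    oarea_def p1 p2 p3 p4 p5 eA eA'
  have h1: "t1 + t2 + t3 + t4 + t5 = 2 * A - A'" unfolding defs by (simp add: field_simps)
  have h2: "t1 * t2 + t2 * t3 + t3 * t4 + t4 * t5 + t5 * t1 = A * (A - A')"
    unfolding defs by (simp add: field_simps)
  have h3: "t1' + t2' + t3' + t4' + t5' = 2 * A' + A" unfolding defs by (simp add: field_simps)
  have h4: "t1' * t3' + t3' * t5' + t5' * t2' + t2' * t4' + t4' * t1' = A' * (A + A')"
    unfolding defs by (simp add: field_simps)
  show ?thesis unfolding Let_def h1 h2 h3 h4 by (simp add: power2_eq_square algebra_simps)
qed

end
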